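(* Assume the hypotheses of the following statement with, in addition, $\bar u<0$: $a,b\in C^1(\mathbb{R})$, $a>0$, and there is $\bar u<0$ with $-\infty<\inf_{\mathbb{R}} b<\inf_{u\ge\bar u}b(u)$; for each $T>0$ let $u_T$ be a minimizer of $F_T$ over $U_T$. Then for all sufficiently large $T$ there exists $x\in[0,T-1]$ with $\int_x^{x+1}u_T(s)\,ds<0$.
   Context: For $T>0$, $U_T=\{1+v: v\in H^1_0(0,T)\}$ and $F_T(u)=\int_0^T\bigl[a(u)(u')^2+b(u)\bigr]\,dx$. No contact constraint is imposed in the minimization. *)

theory Defs
  imports "HOL-Analysis.Analysis"
begin

text \<open>H^1_0(0,T) in one dimension, via the continuous representative:
  v(x) = integral of its weak derivative g over [0,x], with g in L^2(0,T), and v(T) = 0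
  (v(0) = 0 is automatic).\<close>
definition H10 :: "real \<Rightarrow> (real \<Rightarrow> real) \<Rightarrow> (real \<Rightarrow> real) \<Rightarrow> bool" where
  "H10 T v g \<longleftrightarrow>
     g \<in> borel_measurable lborel \<and>
     set_integrable lborel {0..T} g \<and>
     set_integrable lborel {0..T} (\<lambda>x. (g x)\<^sup>2) \<and>
     (\<forall>x\<in>{0..T}. v x = (LINT s:{0..x}|lborel. g s)) \<and>
     v T = 0"

definition FT :: "(real \<Rightarrow> real) \<Rightarrow> (real \<Rightarrow> real) \<Rightarrow> real \<Rightarrow> (real \<Rightarrow> real) \<Rightarrow> (real \<Rightarrow> real) \<Rightarrow> real" where
  "FT a b T u g = (LINT x:{0..T}|lborel. a (u x) * (g x)\<^sup>2 + b (u x))"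

text \<open>u is a minimizer of F_T over U_T = {1 + v : v \<in> H^1_0(0,T)} (only values on [0,T] matter).\<close>
definition is_minimizer :: "(real \<Rightarrow> real) \<Rightarrow> (real \<Rightarrow> real) \<Rightarrow> real \<Rightarrow> (real \<Rightarrow> real) \<Rightarrow> bool" where
  "is_minimizer a b T u \<longleftrightarrow>
     (\<exists>v g. H10 T v g \<and> (\<forall>x\<in>{0..T}. u x = 1 + v x) \<and>
        (\<forall>w h. H10 T w h \<longrightarrow> FT a b T u g \<le> FT a b T (\<lambda>x. 1 + w x) h))"

end

theory Submission
  imports Defs
begin

lemma bounded_set_integrable:
  fixes f :: "real \<Rightarrow> real"
  assumes fm: "f \<in> borel_measurable borel" and bd: "\<forall>x\<in>{c..d}. \<bar>f x\<bar> \<le> M"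
  shows "set_integrable lborel {c..d} f"
proof -
  have i: "integrable lborel (\<lambda>x. indicator {c..d} x *\<^sub>R M)"
    using borel_integrable_compact[of "{c..d}" "\<lambda>_. M"] by auto
  have m: "(\<lambda>x. indicator {c..d} x *\<^sub>R f x) \<in> borel_measurable lborel"
    using fm by measurable
  have ae: "AE x in lborel. norm (indicator {c..d} x *\<^sub>R f x) \<le> norm (indicator {c..d} x *\<^sub>R M)"
    using bd by (intro AE_I2) (force simp: indicator_def)
  show ?thesis unfolding set_integrable_def
    by (rule Bochner_Integration.integrable_bound[OF i m ae])
qed

lemma H10_facts:
  assumes h: "H10 T v g" and T: "T \<ge> 0"
  shows "g integrable_on {0..T}" "(\<lambda>x. (g x)\<^sup>2) integrable_on {0..T}"
    "\<forall>x\<in>{0..T}. v x = integral {0..x} g" "continuous_on {0..T} v"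
    "set_integrable lborel {0..T} g" "set_integrable lborel {0..T} (\<lambda>x. (g x)\<^sup>2)"
    "g \<in> borel_measurable lborel"
proof -
  have gm: "g \<in> borel_measurable lborel" and si: "set_integrable lborel {0..T} g"
    and si2: "set_integrable lborel {0..T} (\<lambda>x. (g x)\<^sup>2)"
    and vx: "\<forall>x\<in>{0..T}. v x = (LINT s:{0..x}|lborel. g s)"
    using h unfolding H10_def by auto
  show "g \<in> borel_measurable lborel" "set_integrable lborel {0..T} g" "set_integrable lborel {0..T} (\<lambda>x. (g x)\<^sup>2)"
    using gm si si2 by auto
  show gi: "g integrable_on {0..T}" using set_borel_integral_eq_integral(1)[OF si] .
  show "(\<lambda>x. (g x)\<^sup>2) integrable_on {0..T}" using set_borel_integral_eq_integral(1)[OF si2] .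
  have vx2: "\<forall>x\<in>{0..T}. v x = integral {0..x} g"
  proof
    fix x assume x: "x \<in> {0..T}"
    have "set_integrable lborel {0..x} g"
      by (rule set_integrable_subset[OF si]) (use x in auto)
    then show "v x = integral {0..x} g" using vx x set_borel_integral_eq_integral(2) by metis
  qed
  then show "\<forall>x\<in>{0..T}. v x = integral {0..x} g" .
  show "continuous_on {0..T} v"
    using continuous_on_cong[of "{0..T}" "{0..T}" v "\<lambda>x. integral {0..x} g"] vx2
      indefinite_integral_continuous_1[OF gi] by auto
qed


lemma FT_HK:
  fixes a b u :: "real \<Rightarrow> real"
  assumes h: "H10 T v g" and T: "T \<ge> 0" and ca: "continuous_on UNIV a" and cb: "continuous_on UNIV b"
    and uv: "\<forall>x\<in>{0..T}. u x = 1 + v x"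
  shows "continuous_on {0..T} u" "(\<lambda>x. a (u x) * (g x)\<^sup>2) integrable_on {0..T}"
    "(\<lambda>x. b (u x)) integrable_on {0..T}"
    "(\<lambda>x. a (u x) * (g x)\<^sup>2 + b (u x)) integrable_on {0..T}"
    "FT a b T u g = integral {0..T} (\<lambda>x. a (u x) * (g x)\<^sup>2 + b (u x))"
proof -
  note F = H10_facts[OF h T]
  have cu: "continuous_on {0..T} u"
    using continuous_on_cong[of "{0..T}" "{0..T}" u "\<lambda>x. 1 + v x"] uv
      continuous_on_add[OF continuous_on_const F(4)] by auto
  then show "continuous_on {0..T} u" .
  have cau: "continuous_on {0..T} (\<lambda>x. a (u x))"
    using continuous_on_compose2[OF ca cu] by auto
  have cbu: "continuous_on {0..T} (\<lambda>x. b (u x))"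
    using continuous_on_compose2[OF cb cu] by auto
  have "compact ((\<lambda>x. a (u x)) ` {0..T})"
    by (rule compact_continuous_image[OF cau]) simp
  then obtain Ma where Ma: "\<forall>x\<in>{0..T}. \<bar>a (u x)\<bar> \<le> Ma"
    using compact_imp_bounded bounded_real by (metis imageI)
  have s2: "set_integrable lborel {0..T} (\<lambda>x. b (u x))"
    unfolding set_integrable_def by (rule borel_integrable_compact[OF _ cbu]) simp
  have s1: "set_integrable lborel {0..T} (\<lambda>x. a (u x) * (g x)\<^sup>2)"
  proof -
    have i: "integrable lborel (\<lambda>x. Ma * (indicator {0..T} x *\<^sub>R (g x)\<^sup>2))"
      using F(6) unfolding set_integrable_def by auto
    have gm: "g \<in> borel_measurable borel" using F(7) by simp
    have m1: "(\<lambda>x. indicator {0..T} x *\<^sub>R a (u x)) \<in> borel_measurable borel"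
      by (rule borel_measurable_continuous_on_indicator[OF _ cau]) simp
    have "(\<lambda>x. (indicator {0..T} x *\<^sub>R a (u x)) * (g x)\<^sup>2) \<in> borel_measurable borel"
      using m1 gm by measurable
    then have m: "(\<lambda>x. indicator {0..T} x *\<^sub>R (a (u x) * (g x)\<^sup>2)) \<in> borel_measurable lborel"
      by (simp add: mult.assoc)
    have ae: "AE x in lborel. norm (indicator {0..T} x *\<^sub>R (a (u x) * (g x)\<^sup>2))
        \<le> norm (Ma * (indicator {0..T} x *\<^sub>R (g x)\<^sup>2))"
    proof (intro AE_I2)
      fix x show "norm (indicator {0..T} x *\<^sub>R (a (u x) * (g x)\<^sup>2))
        \<le> norm (Ma * (indicator {0..T} x *\<^sub>R (g x)\<^sup>2))"
      proof (cases "x \<in> {0..T}")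
        case True
        then have "\<bar>a (u x)\<bar> \<le> Ma" using Ma by auto
        then have "\<bar>a (u x)\<bar> * (g x)\<^sup>2 \<le> Ma * (g x)\<^sup>2" by (simp add: mult_right_mono)
        moreover have "Ma \<le> \<bar>Ma\<bar>" by simp
        ultimately show ?thesis using True by (simp add: abs_mult) (meson mult_right_mono order_trans zero_le_power2)
      qed simp
    qed
    show ?thesis unfolding set_integrable_def
      by (rule Bochner_Integration.integrable_bound[OF i m ae])
  qed
  have s: "set_integrable lborel {0..T} (\<lambda>x. a (u x) * (g x)\<^sup>2 + b (u x))"
    using set_integral_add(1)[OF s1 s2] .
  show "(\<lambda>x. a (u x) * (g x)\<^sup>2) integrable_on {0..T}" using set_borel_integral_eq_integral(1)[OF s1] .
  show "(\<lambda>x. b (u x)) integrable_on {0..T}" using set_borel_integral_eq_integral(1)[OF s2] .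
  show "(\<lambda>x. a (u x) * (g x)\<^sup>2 + b (u x)) integrable_on {0..T}" using set_borel_integral_eq_integral(1)[OF s] .
  show "FT a b T u g = integral {0..T} (\<lambda>x. a (u x) * (g x)\<^sup>2 + b (u x))"
    unfolding FT_def using set_borel_integral_eq_integral(2)[OF s] .
qed


lemma crossing:
  fixes u :: "real \<Rightarrow> real"
  assumes yz: "y \<le> z" and cu: "continuous_on {y..z} u" and uy: "u y \<ge> 0" and uz: "u z \<le> ubar"
    and ub: "ubar < 0"
  shows "\<exists>p q. y \<le> p \<and> p \<le> q \<and> q \<le> z \<and> u p = 0 \<and> u q = ubar \<and> (\<forall>r\<in>{p..q}. ubar \<le> u r \<and> u r \<le> 0)"
proof -
  define Z where "Z = {r \<in> {y..z}. u r = 0}"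
  have "closed Z" unfolding Z_def by (rule continuous_closed_preimage_constant[OF cu]) simp
  moreover have "bounded Z" unfolding Z_def by (rule bounded_subset[of "{y..z}"]) auto
  ultimately have cZ: "compact Z" using compact_eq_bounded_closed by blast
  obtain r0 where "y \<le> r0" "r0 \<le> z" "u r0 = 0" using IVT2'[of u z 0 y] uy uz ub yz cu by auto
  then have "Z \<noteq> {}" unfolding Z_def by auto
  then obtain p where pZ: "p \<in> Z" and pmax: "\<forall>t\<in>Z. t \<le> p" using compact_attains_sup[OF cZ] by blast
  have p: "y \<le> p" "p \<le> z" "u p = 0" using pZ unfolding Z_def by auto
  have cu2: "continuous_on {p..z} u" using continuous_on_subset[OF cu] p by auto
  define Q where "Q = {r \<in> {p..z}. u r = ubar}"
  have "closed Q" unfolding Q_def by (rule continuous_closed_preimage_constant[OF cu2]) simp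
  moreover have "bounded Q" unfolding Q_def by (rule bounded_subset[of "{p..z}"]) auto
  ultimately have cQ: "compact Q" using compact_eq_bounded_closed by blast
  obtain r1 where "p \<le> r1" "r1 \<le> z" "u r1 = ubar" using IVT2'[of u z ubar p] p uz ub cu2 by auto
  then have "Q \<noteq> {}" unfolding Q_def by auto
  then obtain q where qQ: "q \<in> Q" and qmin: "\<forall>t\<in>Q. q \<le> t" using compact_attains_inf[OF cQ] by blast
  have q: "p \<le> q" "q \<le> z" "u q = ubar" using qQ unfolding Q_def by auto
  have "\<forall>r\<in>{p..q}. ubar \<le> u r \<and> u r \<le> 0"
  proof
    fix r assume r: "r \<in> {p..q}"
    show "ubar \<le> u r \<and> u r \<le> 0"
    proof (rule ccontr)
      assume "\<not> (ubar \<le> u r \<and> u r \<le> 0)"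
      then consider "u r < ubar" | "u r > 0" by linarith
      then show False
      proof cases
        case 1
        have c: "continuous_on {p..r} u" using continuous_on_subset[OF cu] p q r by auto
        obtain x where "p \<le> x" "x \<le> r" "u x = ubar" using IVT2'[of u r ubar p] 1 p r c ub by auto
        then have "x \<in> Q" using r q unfolding Q_def by auto
        then have "q \<le> x" using qmin by auto
        moreover have "r \<noteq> q" using 1 q by auto
        ultimately show False using \<open>x \<le> r\<close> r by auto
      next
        case 2
        have c: "continuous_on {r..z} u" using continuous_on_subset[OF cu] p q r by auto
        obtain x where "r \<le> x" "x \<le> z" "u x = 0" using IVT2'[of u z 0 r] 2 uz ub r q c by auto
        then have "x \<in> Z" using r p q unfolding Z_def by auto
        then have "x \<le> p" using pmax by auto
        moreover have "r \<noteq> p" using 2 p by auto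
        ultimately show False using \<open>r \<le> x\<close> r by auto
      qed
    qed
  qed
  then show ?thesis using p q by blast
qed

lemma crossing2:
  fixes u :: "real \<Rightarrow> real"
  assumes cu: "continuous_on {c..d} u" and y: "y \<in> {c..d}" and z: "z \<in> {c..d}"
    and uy: "u y \<ge> 0" and uz: "u z \<le> ubar" and ub: "ubar < 0"
  shows "\<exists>p q. c \<le> p \<and> p < q \<and> q \<le> d \<and> \<bar>u q - u p\<bar> = - ubar \<and> (\<forall>r\<in>{p..q}. ubar \<le> u r \<and> u r \<le> 0)"
proof (cases "y \<le> z")
  case True
  have "continuous_on {y..z} u" using continuous_on_subset[OF cu] y z by auto
  from crossing[OF True this uy uz ub] obtain p q where
    pq: "y \<le> p" "p \<le> q" "q \<le> z" "u p = 0" "u q = ubar" "\<forall>r\<in>{p..q}. ubar \<le> u r \<and> u r \<le> 0" by blast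
  have "p \<noteq> q" using pq ub by auto
  then show ?thesis using pq y z by (intro exI[of _ p] exI[of _ q]) auto
next
  case False
  define w where "w = (\<lambda>r. u (- r))"
  have "continuous_on {-y..-z} w" unfolding w_def
    by (rule continuous_on_compose2[OF continuous_on_subset[OF cu] continuous_on_minus[OF continuous_on_id]])
       (use y z in auto)
  from crossing[of "-y" "-z" w ubar, OF _ this] False uy uz ub obtain p q where
    pq: "-y \<le> p" "p \<le> q" "q \<le> -z" "w p = 0" "w q = ubar" "\<forall>r\<in>{p..q}. ubar \<le> w r \<and> w r \<le> 0"
    unfolding w_def by auto
  have "p \<noteq> q" using pq ub by auto
  have "\<forall>r\<in>{-q..-p}. ubar \<le> u r \<and> u r \<le> 0"
  proof
    fix r assume "r \<in> {-q..-p}"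
    then have "-r \<in> {p..q}" by auto
    then show "ubar \<le> u r \<and> u r \<le> 0" using pq(6) unfolding w_def by fastforce
  qed
  then show ?thesis using pq y z \<open>p \<noteq> q\<close> unfolding w_def by (intro exI[of _ "-q"] exI[of _ "-p"]) auto
qed

lemma cauchy_schwarz_int:
  fixes g :: "real \<Rightarrow> real"
  assumes pq: "p < q" and gi: "g integrable_on {p..q}" and g2: "(\<lambda>x. (g x)\<^sup>2) integrable_on {p..q}"
  shows "(integral {p..q} g)\<^sup>2 \<le> (q - p) * integral {p..q} (\<lambda>x. (g x)\<^sup>2)"
proof -
  define L where "L = q - p"
  define I where "I = integral {p..q} g"
  define G where "G = integral {p..q} (\<lambda>x. (g x)\<^sup>2)"
  have L: "L > 0" using pq unfolding L_def by simp
  have e: "\<And>x. (L * g x - I)\<^sup>2 = L\<^sup>2 * (g x)\<^sup>2 + (- 2 * L * I) * g x + I\<^sup>2"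
    by (simp add: power2_eq_square algebra_simps)
  have i1: "(\<lambda>x. L\<^sup>2 * (g x)\<^sup>2) integrable_on {p..q}" using integrable_on_cmult_left[OF g2] by simp
  have i2: "(\<lambda>x. (- 2 * L * I) * g x) integrable_on {p..q}" using integrable_on_cmult_left[OF gi, of "- 2 * L * I"] by simp
  have i3: "(\<lambda>x. I\<^sup>2) integrable_on {p..q}" by (rule integrable_const_ivl)
  have "integral {p..q} (\<lambda>x. (L * g x - I)\<^sup>2)
      = integral {p..q} (\<lambda>x. L\<^sup>2 * (g x)\<^sup>2 + (- 2 * L * I) * g x) + integral {p..q} (\<lambda>x. I\<^sup>2)"
    unfolding e by (rule integral_add[OF integrable_add[OF i1 i2] i3])
  also have "\<dots> = integral {p..q} (\<lambda>x. L\<^sup>2 * (g x)\<^sup>2) + integral {p..q} (\<lambda>x. (- 2 * L * I) * g x) + integral {p..q} (\<lambda>x. I\<^sup>2)"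
    by (simp only: integral_add[OF i1 i2])
  also have "\<dots> = L\<^sup>2 * G + (- 2 * L * I) * I + I\<^sup>2 * L"
    using pq unfolding G_def I_def L_def by simp
  finally have eq: "integral {p..q} (\<lambda>x. (L * g x - I)\<^sup>2) = L * (L * G - I\<^sup>2)"
    by (simp add: power2_eq_square algebra_simps)
  have "integral {p..q} (\<lambda>x. (L * g x - I)\<^sup>2) \<ge> 0"
  proof (rule integral_nonneg)
    show "(\<lambda>x. (L * g x - I)\<^sup>2) integrable_on {p..q}"
      unfolding e by (rule integrable_add[OF integrable_add[OF i1 i2] i3])
  qed simp
  then have "L * (L * G - I\<^sup>2) \<ge> 0" using eq by simp
  then have "L * G - I\<^sup>2 \<ge> 0" using L by (simp add: zero_le_mult_iff)
  then show ?thesis unfolding L_def I_def G_def by simp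
qed


lemma unit_lower:
  fixes a b u g :: "real \<Rightarrow> real"
  assumes cu: "continuous_on {c..c+1} u"
    and ug: "\<forall>p\<in>{c..c+1}. \<forall>q\<in>{p..c+1}. u q - u p = integral {p..q} g"
    and gi: "g integrable_on {c..c+1}" and g2: "(\<lambda>x. (g x)\<^sup>2) integrable_on {c..c+1}"
    and fa: "(\<lambda>x. a (u x) * (g x)\<^sup>2) integrable_on {c..c+1}"
    and fb: "(\<lambda>x. b (u x)) integrable_on {c..c+1}"
    and apos: "\<forall>x. a x > 0" and alpha: "\<forall>y\<in>{ubar..0}. a y \<ge> \<alpha>"
    and bm: "\<forall>y. b y \<ge> m" and bm': "\<forall>y\<ge>ubar. b y \<ge> m'"
    and avg: "integral {c..c+1} u \<ge> 0" and ub: "ubar < 0" and alp: "\<alpha> > 0"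
  shows "integral {c..c+1} (\<lambda>x. a (u x) * (g x)\<^sup>2 + b (u x)) \<ge> m + min (m' - m) (\<alpha> * ubar\<^sup>2)"
proof -
  have split: "integral {c..c+1} (\<lambda>x. a (u x) * (g x)\<^sup>2 + b (u x))
      = integral {c..c+1} (\<lambda>x. a (u x) * (g x)\<^sup>2) + integral {c..c+1} (\<lambda>x. b (u x))"
    by (rule integral_add[OF fa fb])
  have Bm: "integral {c..c+1} (\<lambda>x. b (u x)) \<ge> m"
  proof -
    have "integral {c..c+1} (\<lambda>x. m) \<le> integral {c..c+1} (\<lambda>x. b (u x))"
      by (rule integral_le[OF _ fb]) (use bm in auto)
    then show ?thesis by simp
  qed
  have A0: "integral {c..c+1} (\<lambda>x. a (u x) * (g x)\<^sup>2) \<ge> 0"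
    by (rule integral_nonneg[OF fa]) (metis apos less_imp_le zero_le_power2 mult_nonneg_nonneg)
  show ?thesis
  proof (cases "\<forall>t\<in>{c..c+1}. u t \<ge> ubar")
    case True
    have "integral {c..c+1} (\<lambda>x. m') \<le> integral {c..c+1} (\<lambda>x. b (u x))"
      by (rule integral_le[OF _ fb]) (use bm' True in auto)
    then have "integral {c..c+1} (\<lambda>x. b (u x)) \<ge> m'" by simp
    then show ?thesis using split A0 by linarith
  next
    case False
    then obtain z where z: "z \<in> {c..c+1}" "u z \<le> ubar" by force
    have "\<exists>y\<in>{c..c+1}. u y \<ge> 0"
    proof (rule ccontr)
      assume neg: "\<not> (\<exists>y\<in>{c..c+1}. u y \<ge> 0)"
      obtain x0 where x0: "x0 \<in> {c..c+1}" "\<forall>y\<in>{c..c+1}. u y \<le> u x0"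
        using continuous_attains_sup[OF _ _ cu] by auto
      have "integral {c..c+1} u \<le> integral {c..c+1} (\<lambda>x. u x0)"
        by (rule integral_le[OF integrable_continuous_interval[OF cu]]) (use x0 in auto)
      then have "integral {c..c+1} u \<le> u x0" by simp
      moreover have "u x0 < 0" using neg x0(1) by (meson not_le)
      ultimately show False using avg by linarith
    qed
    then obtain y where y: "y \<in> {c..c+1}" "u y \<ge> 0" by blast
    obtain p q where pq: "c \<le> p" "p < q" "q \<le> c+1" "\<bar>u q - u p\<bar> = - ubar"
      "\<forall>r\<in>{p..q}. ubar \<le> u r \<and> u r \<le> 0"
      using crossing2[OF cu y(1) z(1) y(2) z(2) ub] by blast
    have sub: "{p..q} \<subseteq> {c..c+1}" using pq by auto
    have fa': "(\<lambda>x. a (u x) * (g x)\<^sup>2) integrable_on {p..q}" by (rule integrable_on_subinterval[OF fa sub])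
    have gi': "g integrable_on {p..q}" by (rule integrable_on_subinterval[OF gi sub])
    have g2': "(\<lambda>x. (g x)\<^sup>2) integrable_on {p..q}" by (rule integrable_on_subinterval[OF g2 sub])
    have "integral {p..q} (\<lambda>x. a (u x) * (g x)\<^sup>2) \<le> integral {c..c+1} (\<lambda>x. a (u x) * (g x)\<^sup>2)"
      by (rule integral_subset_le[OF sub fa' fa]) (metis apos less_imp_le zero_le_power2 mult_nonneg_nonneg)
    moreover have "integral {p..q} (\<lambda>x. \<alpha> * (g x)\<^sup>2) \<le> integral {p..q} (\<lambda>x. a (u x) * (g x)\<^sup>2)"
    proof (rule integral_le[OF _ fa'])
      show "(\<lambda>x. \<alpha> * (g x)\<^sup>2) integrable_on {p..q}" using integrable_on_cmult_left[OF g2', of \<alpha>] by simp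
      fix x assume "x \<in> {p..q}"
      then have "a (u x) \<ge> \<alpha>" using pq(5) alpha by auto
      then show "\<alpha> * (g x)\<^sup>2 \<le> a (u x) * (g x)\<^sup>2" by (simp add: mult_right_mono)
    qed
    moreover have "\<alpha> * ubar\<^sup>2 \<le> integral {p..q} (\<lambda>x. \<alpha> * (g x)\<^sup>2)"
    proof -
      have I: "u q - u p = integral {p..q} g" using ug pq by auto
      have "ubar\<^sup>2 = (u q - u p)\<^sup>2" using pq(4) by (metis power2_abs power2_minus)
      also have "\<dots> \<le> (q - p) * integral {p..q} (\<lambda>x. (g x)\<^sup>2)"
        unfolding I by (rule cauchy_schwarz_int[OF pq(2) gi' g2'])
      also have "\<dots> \<le> integral {p..q} (\<lambda>x. (g x)\<^sup>2)"
      proof -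
        have "integral {p..q} (\<lambda>x. (g x)\<^sup>2) \<ge> 0" by (rule integral_nonneg[OF g2']) auto
        then show ?thesis using pq by (simp add: mult_left_le_one_le)
      qed
      finally have "ubar\<^sup>2 \<le> integral {p..q} (\<lambda>x. (g x)\<^sup>2)" .
      moreover have "\<alpha> \<ge> 0" using alp by simp
      ultimately show ?thesis by (simp add: mult_left_mono)
    qed
    ultimately show ?thesis using split Bm by linarith
  qed
qed


lemma total_lower:
  fixes f :: "real \<Rightarrow> real"
  assumes T: "T \<ge> 0" and fi: "f integrable_on {0..T}" and fm: "\<forall>x\<in>{0..T}. f x \<ge> m"
    and unit: "\<forall>j::nat. real j + 1 \<le> T \<longrightarrow> integral {real j..real j+1} f \<ge> m + \<eta>"
    and eta: "\<eta> \<ge> 0"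
  shows "integral {0..T} f \<ge> m * T + \<eta> * (T - 1)"
proof -
  have ind: "real n \<le> T \<longrightarrow> integral {0..real n} f \<ge> real n * (m + \<eta>)" for n :: nat
  proof (induction n)
    case 0
    then show ?case by simp
  next
    case (Suc n)
    show ?case
    proof
      assume le: "real (Suc n) \<le> T"
      have fi': "f integrable_on {0..real n + 1}" by (rule integrable_on_subinterval[OF fi]) (use le in auto)
      have "integral {0..real n} f + integral {real n..real n + 1} f = integral {0..real n + 1} f"
        by (rule Henstock_Kurzweil_Integration.integral_combine[OF _ _ fi']) auto
      moreover have "integral {real n..real n+1} f \<ge> m + \<eta>" using unit le by auto
      moreover have "integral {0..real n} f \<ge> real n * (m + \<eta>)" using Suc le by auto
      ultimately show "integral {0..real (Suc n)} f \<ge> real (Suc n) * (m + \<eta>)"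
        by (simp add: algebra_simps)
    qed
  qed
  define N where "N = nat \<lfloor>T\<rfloor>"
  have N1: "real N \<le> T" "real N \<ge> T - 1" unfolding N_def using T by linarith+
  have "integral {0..real N} f + integral {real N..T} f = integral {0..T} f"
    by (rule Henstock_Kurzweil_Integration.integral_combine[OF _ _ fi]) (use N1 in auto)
  moreover have "integral {real N..T} f \<ge> m * (T - real N)"
  proof -
    have "integral {real N..T} (\<lambda>x. m) \<le> integral {real N..T} f"
      by (rule integral_le[OF _ integrable_on_subinterval[OF fi]]) (use fm N1 in auto)
    then show ?thesis using N1 by (simp add: mult.commute)
  qed
  moreover have "integral {0..real N} f \<ge> real N * (m + \<eta>)" using ind N1 by auto
  moreover have "\<eta> * real N \<ge> \<eta> * (T - 1)" using N1 eta by (simp add: mult_left_mono)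
  ultimately show ?thesis by (simp add: algebra_simps)
qed


lemma competitor:
  fixes a b :: "real \<Rightarrow> real"
  assumes T: "T \<ge> 3" and ca: "continuous_on UNIV a" and cb: "continuous_on UNIV b"
    and u0: "u0 \<le> 1" and Mab: "\<forall>y\<in>{u0..1}. \<bar>a y\<bar> \<le> Ma \<and> \<bar>b y\<bar> \<le> Mb"
  shows "\<exists>w h. H10 T w h \<and> FT a b T (\<lambda>x. 1 + w x) h \<le> 2 * (Ma * (u0 - 1)\<^sup>2 + Mb) + b u0 * (T - 2)"
proof -
  define k where "k = u0 - 1"
  have k: "k \<le> 0" using u0 unfolding k_def by simp
  define h where "h = (\<lambda>s::real. k * indicator {..<1} s - k * indicator {T-1<..} s)"
  define w where "w = (\<lambda>x::real. if x \<le> 1 then k * x else if x \<le> T - 1 then k else k - k * (x - (T - 1)))"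
  have hv: "\<And>s. h s = (if s < 1 then k else if s \<le> T - 1 then 0 else -k)"
    unfolding h_def using T by (auto simp: indicator_def)
  have hm: "h \<in> borel_measurable borel" unfolding h_def by measurable
  have hm2: "(\<lambda>x. (h x)\<^sup>2) \<in> borel_measurable borel" using hm by measurable
  have hb: "\<bar>h x\<bar> \<le> \<bar>k\<bar>" for x by (simp add: hv)
  have hb2: "\<bar>(h x)\<^sup>2\<bar> \<le> k\<^sup>2" for x by (simp add: hv)
  have hsi: "set_integrable lborel {c..d} h" for c d
    by (rule bounded_set_integrable[OF hm]) (use hb in auto)
  have hsi2: "set_integrable lborel {c..d} (\<lambda>x. (h x)\<^sup>2)" for c d
    by (rule bounded_set_integrable[OF hm2]) (use hb2 in auto)
  have hi: "h integrable_on {c..d}" for c d using set_borel_integral_eq_integral(1)[OF hsi] .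
  have I1: "integral {0..x} h = k * x" if x: "0 \<le> x" "x \<le> 1" for x
  proof -
    have "integral {0..x} h = integral {0..x} (\<lambda>_. k)"
      by (rule integral_spike[of "{1}"]) (use x T in \<open>auto simp: hv\<close>)
    then show ?thesis using x by simp
  qed
  have I2: "integral {0..x} h = k" if x: "1 \<le> x" "x \<le> T - 1" for x
  proof -
    have "integral {0..1} h + integral {1..x} h = integral {0..x} h"
      by (rule Henstock_Kurzweil_Integration.integral_combine[OF _ _ hi]) (use x in auto)
    moreover have "integral {1..x} h = integral {1..x} (\<lambda>_. 0)"
      by (rule integral_cong) (use x in \<open>auto simp: hv\<close>)
    ultimately show ?thesis using I1[of 1] by simp
  qed
  have I3: "integral {0..x} h = k - k * (x - (T - 1))" if x: "T - 1 \<le> x" "x \<le> T" for x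
  proof -
    have "integral {0..T-1} h + integral {T-1..x} h = integral {0..x} h"
      by (rule Henstock_Kurzweil_Integration.integral_combine[OF _ _ hi]) (use x T in auto)
    moreover have "integral {T-1..x} h = integral {T-1..x} (\<lambda>_. -k)"
      by (rule integral_spike[of "{T-1}"]) (use x T in \<open>auto simp: hv\<close>)
    ultimately show ?thesis using I2[of "T-1"] T x by (simp add: mult.commute)
  qed
  have wI: "w x = integral {0..x} h" if x: "0 \<le> x" "x \<le> T" for x
    unfolding w_def using I1 I2 I3 x by auto
  have H: "H10 T w h"
    unfolding H10_def
  proof (intro conjI ballI)
    show "h \<in> borel_measurable lborel" using hm by simp
    show "set_integrable lborel {0..T} h" by (rule hsi)
    show "set_integrable lborel {0..T} (\<lambda>x. (h x)\<^sup>2)" by (rule hsi2)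
    fix x assume x: "x \<in> {0..T}"
    show "w x = (LINT s:{0..x}|lborel. h s)"
      using wI[of x] x set_borel_integral_eq_integral(2)[OF hsi[of 0 x]] by auto
  next
    show "w T = 0" unfolding w_def using T by (simp add: algebra_simps)
  qed
  define f where "f = (\<lambda>x. a (1 + w x) * (h x)\<^sup>2 + b (1 + w x))"
  note FH = FT_HK[OF H _ ca cb, of "\<lambda>x. 1 + w x"]
  have FTe: "FT a b T (\<lambda>x. 1 + w x) h = integral {0..T} f" unfolding f_def using FH(5) T by simp
  have fi: "f integrable_on {0..T}" unfolding f_def using FH(4) T by simp
  have wr: "1 + w x \<in> {u0..1}" if x: "0 \<le> x" "x \<le> T" for x
  proof -
    have "k \<le> w x \<and> w x \<le> 0"
    proof (cases "x \<le> 1")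
      case True
      have "k * (x - 1) \<ge> 0" using k True by (simp add: mult_nonpos_nonpos)
      moreover have "k * x \<le> 0" using k x by (simp add: mult_nonpos_nonneg)
      ultimately show ?thesis using True unfolding w_def by (simp add: algebra_simps)
    next
      case False
      show ?thesis
      proof (cases "x \<le> T - 1")
        case True then show ?thesis using False k unfolding w_def by simp
      next
        case F2: False
        have "k * (x - T) \<ge> 0" using k x by (simp add: mult_nonpos_nonpos)
        then have "k * (x - (T - 1)) \<ge> k" by (simp add: algebra_simps)
        moreover have "k * (x - (T - 1)) \<le> 0" using k F2 by (simp add: mult_nonpos_nonneg)
        ultimately show ?thesis using False F2 unfolding w_def by simp
      qed
    qed
    then show ?thesis unfolding k_def by simp
  qed
  define C where "C = Ma * k\<^sup>2 + Mb"
  have fC: "f x \<le> C" if x: "0 \<le> x" "x \<le> T" for x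
  proof -
    have ab: "\<bar>a (1 + w x)\<bar> \<le> Ma" "\<bar>b (1 + w x)\<bar> \<le> Mb" using Mab wr[OF x] by auto
    have "a (1 + w x) * (h x)\<^sup>2 \<le> \<bar>a (1 + w x)\<bar> * (h x)\<^sup>2" by (simp add: mult_right_mono)
    also have "\<dots> \<le> Ma * (h x)\<^sup>2" using ab by (simp add: mult_right_mono)
    also have "\<dots> \<le> Ma * k\<^sup>2" using hb2[of x] ab(1) by (simp add: mult_left_mono)
    finally show ?thesis unfolding f_def C_def using ab by linarith
  qed
  have fmid: "f x = b u0" if x: "1 \<le> x" "x \<le> T - 1" for x
    unfolding f_def w_def k_def using x T by (auto simp: hv k_def)
  have "integral {0..1} f + integral {1..T} f = integral {0..T} f"
    by (rule Henstock_Kurzweil_Integration.integral_combine[OF _ _ fi]) (use T in auto)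
  moreover have "integral {1..T-1} f + integral {T-1..T} f = integral {1..T} f"
    by (rule Henstock_Kurzweil_Integration.integral_combine[OF _ _ integrable_on_subinterval[OF fi]]) (use T in auto)
  moreover have "integral {0..1} f \<le> C"
  proof -
    have fi1: "f integrable_on {0..1}" by (rule integrable_on_subinterval[OF fi]) (use T in auto)
    have "integral {0..1} f \<le> integral {0..1} (\<lambda>_::real. C)"
      by (rule integral_le[OF fi1]) (use fC T in auto)
    then show ?thesis by simp
  qed
  moreover have "integral {T-1..T} f \<le> C"
  proof -
    have fi1: "f integrable_on {T-1..T}" by (rule integrable_on_subinterval[OF fi]) (use T in auto)
    have "integral {T-1..T} f \<le> integral {T-1..T} (\<lambda>_. C)"
      by (rule integral_le[OF fi1]) (use fC T in auto)
    then show ?thesis by simp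
  qed
  moreover have "integral {1..T-1} f = b u0 * (T - 2)"
  proof -
    have "integral {1..T-1} f = integral {1..T-1} (\<lambda>_. b u0)"
      by (rule integral_cong) (use fmid in auto)
    then show ?thesis using T by simp
  qed
  ultimately have "integral {0..T} f \<le> 2 * C + b u0 * (T - 2)" by linarith
  then show ?thesis using H FTe unfolding C_def k_def by (intro exI[of _ w] exI[of _ h]) auto
qed


theorem mainTheorem3:
  fixes a b :: "real \<Rightarrow> real" and ubar :: real and uT :: "real \<Rightarrow> real \<Rightarrow> real"
  assumes "a C1_differentiable_on UNIV" and "b C1_differentiable_on UNIV"
    and "\<forall>u. a u > 0"
    and "ubar < 0"
    and "bdd_below (range b)"
    and "Inf (range b) < Inf (b ` {ubar..})"
    and "\<forall>T>0. is_minimizer a b T (uT T)"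
  shows "\<forall>\<^sub>F T in at_top. \<exists>x\<in>{0..T-1}. (LINT s:{x..x+1}|lborel. uT T s) < 0"
proof -
  note apos = assms(3) and ub = assms(4) and bdd = assms(5) and minim = assms(7)
  have ca: "continuous_on UNIV a" using C1_differentiable_imp_continuous_on[OF assms(1)] .
  have cb: "continuous_on UNIV b" using C1_differentiable_imp_continuous_on[OF assms(2)] .
  define m where "m = Inf (range b)"
  define m' where "m' = Inf (b ` {ubar..})"
  have mm': "m < m'" using assms(6) unfolding m_def m'_def .
  have bm: "\<forall>y. b y \<ge> m" unfolding m_def using bdd by (auto intro: cInf_lower)
  have bdd': "bdd_below (b ` {ubar..})" by (rule bdd_below_mono[OF bdd]) auto
  have bm': "\<forall>y\<ge>ubar. b y \<ge> m'" unfolding m'_def using bdd' by (auto intro: cInf_lower)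
  obtain x0 where x0: "x0 \<in> {ubar..0}" "\<forall>y\<in>{ubar..0}. a x0 \<le> a y"
  proof -
    have c: "continuous_on {ubar..0} a" using continuous_on_subset[OF ca] by blast
    show ?thesis using continuous_attains_inf[OF compact_Icc _ c] ub that by auto
  qed
  define \<alpha> where "\<alpha> = a x0"
  have alp: "\<alpha> > 0" unfolding \<alpha>_def using apos by auto
  have alpha: "\<forall>y\<in>{ubar..0}. a y \<ge> \<alpha>" unfolding \<alpha>_def using x0 by auto
  define \<eta> where "\<eta> = min (m' - m) (\<alpha> * ubar\<^sup>2)"
  have eta: "\<eta> > 0" unfolding \<eta>_def using mm' alp ub by auto
  have "Inf (range b) < m + \<eta> / 2" using eta unfolding m_def by simp
  then obtain u0 where u0b: "b u0 < m + \<eta> / 2" using cInf_lessD[of "range b"] by auto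
  have "u0 < ubar"
  proof (rule ccontr)
    assume "\<not> u0 < ubar"
    then have "b u0 \<ge> m'" using bm' by auto
    moreover have "\<eta> \<le> m' - m" unfolding \<eta>_def by simp
    ultimately show False using u0b eta by linarith
  qed
  then have u01: "u0 \<le> 1" using ub by simp
  have "bounded (a ` {u0..1})" by (rule compact_imp_bounded[OF compact_continuous_image]) (use continuous_on_subset[OF ca] in auto)
  then obtain Ma where Ma: "\<forall>y\<in>{u0..1}. \<bar>a y\<bar> \<le> Ma" unfolding bounded_real by auto
  have "bounded (b ` {u0..1})" by (rule compact_imp_bounded[OF compact_continuous_image]) (use continuous_on_subset[OF cb] in auto)
  then obtain Mb where Mb: "\<forall>y\<in>{u0..1}. \<bar>b y\<bar> \<le> Mb" unfolding bounded_real by auto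
  define K where "K = 2 * (Ma * (u0 - 1)\<^sup>2 + Mb)"
  define N where "N = max 3 (2 * (K - 2 * m) / \<eta> + 1)"
  have main: "\<exists>x\<in>{0..T-1}. (LINT s:{x..x+1}|lborel. uT T s) < 0" if T: "T \<ge> N" for T
  proof (rule ccontr)
    assume "\<not> (\<exists>x\<in>{0..T-1}. (LINT s:{x..x+1}|lborel. uT T s) < 0)"
    then have avg: "\<forall>x\<in>{0..T-1}. (LINT s:{x..x+1}|lborel. uT T s) \<ge> 0" by (auto simp: not_less)
    have T3: "T \<ge> 3" using T unfolding N_def by simp
    have TN: "T > 2 * (K - 2 * m) / \<eta>" using T unfolding N_def by simp
    obtain v g where h: "H10 T v g" and uv: "\<forall>x\<in>{0..T}. uT T x = 1 + v x"
      and mn: "\<forall>w h. H10 T w h \<longrightarrow> FT a b T (uT T) g \<le> FT a b T (\<lambda>x. 1 + w x) h"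
    proof -
      have "is_minimizer a b T (uT T)" using minim T3 by auto
      then show ?thesis using that unfolding is_minimizer_def by blast
    qed
    have T0: "T \<ge> 0" using T3 by simp
    note HF = H10_facts[OF h T0]
    note FH = FT_HK[OF h T0 ca cb uv]
    define f where "f = (\<lambda>x. a (uT T x) * (g x)\<^sup>2 + b (uT T x))"
    obtain w hh where wh: "H10 T w hh" "FT a b T (\<lambda>x. 1 + w x) hh \<le> K + b u0 * (T - 2)"
      using competitor[OF T3 ca cb u01, of Ma Mb] Ma Mb unfolding K_def by auto
    have upper: "integral {0..T} f \<le> K + b u0 * (T - 2)"
    proof -
      have "FT a b T (uT T) g \<le> FT a b T (\<lambda>x. 1 + w x) hh" using mn wh(1) by blast
      then show ?thesis using wh(2) FH(5) unfolding f_def by linarith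
    qed
    have fi: "f integrable_on {0..T}" unfolding f_def using FH(4) .
    have fm: "\<forall>x\<in>{0..T}. f x \<ge> m"
    proof
      fix x
      have "a (uT T x) * (g x)\<^sup>2 \<ge> 0" by (metis apos less_imp_le zero_le_power2 mult_nonneg_nonneg)
      then show "f x \<ge> m" unfolding f_def using bm[rule_format, of "uT T x"] by linarith
    qed
    have unit: "\<forall>j::nat. real j + 1 \<le> T \<longrightarrow> integral {real j..real j+1} f \<ge> m + \<eta>"
    proof (intro allI impI)
      fix j :: nat assume j: "real j + 1 \<le> T"
      define c where "c = real j"
      have c: "0 \<le> c" "c + 1 \<le> T" using j unfolding c_def by auto
      have sub: "{c..c+1} \<subseteq> {0..T}" using c by auto
      have cu: "continuous_on {c..c+1} (uT T)" by (rule continuous_on_subset[OF FH(1) sub])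
      have ug: "\<forall>p\<in>{c..c+1}. \<forall>q\<in>{p..c+1}. uT T q - uT T p = integral {p..q} g"
      proof (intro ballI)
        fix p q assume p: "p \<in> {c..c+1}" and q: "q \<in> {p..c+1}"
        have gq: "g integrable_on {0..q}" by (rule integrable_on_subinterval[OF HF(1)]) (use p q c in auto)
        have "integral {0..p} g + integral {p..q} g = integral {0..q} g"
          by (rule Henstock_Kurzweil_Integration.integral_combine[OF _ _ gq]) (use p q c in auto)
        moreover have "uT T q = 1 + integral {0..q} g" "uT T p = 1 + integral {0..p} g"
          using uv HF(3) p q c by auto
        ultimately show "uT T q - uT T p = integral {p..q} g" by simp
      qed
      have av: "integral {c..c+1} (uT T) \<ge> 0"
      proof -
        have si: "set_integrable lborel {c..c+1} (uT T)"
          unfolding set_integrable_def by (rule borel_integrable_compact[OF _ cu]) simp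
        have "(LINT s:{c..c+1}|lborel. uT T s) \<ge> 0" using avg c by auto
        then show ?thesis using set_borel_integral_eq_integral(2)[OF si] by simp
      qed
      have "integral {c..c+1} (\<lambda>x. a (uT T x) * (g x)\<^sup>2 + b (uT T x)) \<ge> m + min (m' - m) (\<alpha> * ubar\<^sup>2)"
        by (rule unit_lower[OF cu ug integrable_on_subinterval[OF HF(1) sub] integrable_on_subinterval[OF HF(2) sub]
              integrable_on_subinterval[OF FH(2) sub] integrable_on_subinterval[OF FH(3) sub]
              apos alpha bm bm' av ub alp])
      then show "integral {real j..real j+1} f \<ge> m + \<eta>" unfolding f_def c_def \<eta>_def .
    qed
    have lower: "integral {0..T} f \<ge> m * T + \<eta> * (T - 1)"
      by (rule total_lower[OF T0 fi fm unit]) (use eta in simp)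
    have "b u0 * (T - 2) \<le> (m + \<eta> / 2) * (T - 2)" using u0b T3 by (simp add: mult_right_mono)
    then have e1: "m * T + \<eta> * (T - 1) \<le> K + (m + \<eta> / 2) * (T - 2)" using lower upper by linarith
    have e2: "(m + \<eta> / 2) * (T - 2) = m * T - 2 * m + \<eta> * T / 2 - \<eta>" by (simp add: field_simps)
    have e3: "\<eta> * (T - 1) = \<eta> * T - \<eta>" by (simp add: algebra_simps)
    have "\<eta> * T / 2 \<le> K - 2 * m" using e1 unfolding e2 e3 by simp
    then have "T \<le> 2 * (K - 2 * m) / \<eta>" using eta by (simp add: field_simps)
    then show False using TN by linarith
  qed
  show ?thesis unfolding eventually_at_top_linorder using main by blast
qed

end
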